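(* Let $\mathbf P=(P,\leq,{}',0,1)$ be a poset with complementation. Then the Dedekind-MacNeille completion $\mathrm{DM}(\mathbf P)$ is orthomodular if and only if $\mathbf P$ is a strongly $D$-continuous pseudo-orthomodular poset.
   Context: For $M\subseteq P$, $U(M)$, $L(M)$ are the sets of upper and lower bounds; $U(a,b)=U(\{a,b\})$ etc. For $B,C\subseteq P$, $B\le C$ means $b\le c$ for all $b\in B$, $c\in C$. A poset with complementation is a bounded poset with antitone involution $'$ ($x\le y\Rightarrow y'\le x'$, $x''=x$) with $L(x,x')=\{0\}$, $U(x,x')=\{1\}$; it is pseudo-orthomodular if $L(U(L(x,y),y'),y)=L(x,y)$ for all $x,y$. It is strongly $D$-continuous if for all $B,C\subseteq P$ with $B\le C$: $\bigwedge_{\mathbf P}\{g\in P\mid g\in C\text{ or } g'\in B\}=0$ if and only if every lower bound of $C$ in $P$ is below every upper bound of $B$ in $P$. The Dedekind-MacNeille completion $\mathrm{DM}(\mathbf P)$ is the complete lattice of subsets $B\subseteq P$ with $L(U(B))=B$ under inclusion, with antitone involution $X'=L(\{u'\mid u\in X\})$; a lattice with complementation is orthomodular if $x\vee y=((x\vee y)\wedge y')\vee y$ for all $x,y$. *)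

theory Defs
  imports Main
begin

text \<open>The poset P is the whole type 'a (a bounded partial order, bottom 0 = bot, top 1 = top);
  the complementation is a function cm :: 'a => 'a.\<close>

definition Ub :: "'a::order set \<Rightarrow> 'a set" where
  "Ub M = {x. \<forall>m\<in>M. m \<le> x}"

definition Lb :: "'a::order set \<Rightarrow> 'a set" where
  "Lb M = {x. \<forall>m\<in>M. x \<le> m}"

definition set_le :: "'a::order set \<Rightarrow> 'a set \<Rightarrow> bool" where
  "set_le B C \<longleftrightarrow> (\<forall>b\<in>B. \<forall>c\<in>C. b \<le> c)"

definition poset_compl :: "('a::{order_bot,order_top} \<Rightarrow> 'a) \<Rightarrow> bool" where
  "poset_compl cm \<longleftrightarrow>
     (\<forall>x y. x \<le> y \<longrightarrow> cm y \<le> cm x) \<and>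
     (\<forall>x. cm (cm x) = x) \<and>
     (\<forall>x. Lb {x, cm x} = {bot}) \<and>
     (\<forall>x. Ub {x, cm x} = {top})"

definition pseudo_orthomodular :: "('a::{order_bot,order_top} \<Rightarrow> 'a) \<Rightarrow> bool" where
  "pseudo_orthomodular cm \<longleftrightarrow>
     (\<forall>x y. Lb (Ub (Lb {x, y} \<union> {cm y}) \<union> {y}) = Lb {x, y})"

definition is_Inf :: "'a::order set \<Rightarrow> 'a \<Rightarrow> bool" where
  "is_Inf S a \<longleftrightarrow> a \<in> Lb S \<and> (\<forall>x\<in>Lb S. x \<le> a)"

definition strongly_D_continuous :: "('a::{order_bot,order_top} \<Rightarrow> 'a) \<Rightarrow> bool" where
  "strongly_D_continuous cm \<longleftrightarrow>
     (\<forall>B C. set_le B C \<longrightarrow>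
        (is_Inf {g. g \<in> C \<or> cm g \<in> B} bot \<longleftrightarrow> set_le (Lb C) (Ub B)))"

definition DM :: "'a::order set set" where
  "DM = {B. Lb (Ub B) = B}"

definition DM_join :: "'a::order set \<Rightarrow> 'a set \<Rightarrow> 'a set" where
  "DM_join X Y = Lb (Ub (X \<union> Y))"

definition DM_meet :: "'a::order set \<Rightarrow> 'a set \<Rightarrow> 'a set" where
  "DM_meet X Y = X \<inter> Y"

definition DM_compl :: "('a::order \<Rightarrow> 'a) \<Rightarrow> 'a set \<Rightarrow> 'a set" where
  "DM_compl cm X = Lb (cm ` X)"

definition DM_orthomodular :: "('a::order \<Rightarrow> 'a) \<Rightarrow> bool" where
  "DM_orthomodular cm \<longleftrightarrow>
     (\<forall>X\<in>DM. DM_compl cm X \<in> DM) \<and>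
     (\<forall>X\<in>DM. \<forall>Y\<in>DM. X \<subseteq> Y \<longrightarrow> DM_compl cm Y \<subseteq> DM_compl cm X) \<and>
     (\<forall>X\<in>DM. DM_compl cm (DM_compl cm X) = X) \<and>
     (\<forall>X\<in>DM. DM_meet X (DM_compl cm X) = Lb (Ub {})) \<and>
     (\<forall>X\<in>DM. DM_join X (DM_compl cm X) = UNIV) \<and>
     (\<forall>X\<in>DM. \<forall>Y\<in>DM.
        DM_join X Y = DM_join (DM_meet (DM_join X Y) (DM_compl cm Y)) Y)"

end

theory Submission
  imports Defs
begin

lemma LU_ext: "X \<subseteq> Lb (Ub X)" by (auto simp: Lb_def Ub_def)
lemma Lb_anti: "X \<subseteq> Y \<Longrightarrow> Lb Y \<subseteq> Lb X" by (auto simp: Lb_def)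
lemma Ub_anti: "X \<subseteq> Y \<Longrightarrow> Ub Y \<subseteq> Ub X" by (auto simp: Ub_def)
lemma ULU: "Ub (Lb (Ub X)) = Ub X" by (auto simp: Lb_def Ub_def)
lemma LUL: "Lb (Ub (Lb X)) = Lb X" by (auto simp: Lb_def Ub_def)
lemma Lb_Un: "Lb (A \<union> B) = Lb A \<inter> Lb B" by (auto simp: Lb_def)
lemma Ub_Un: "Ub (A \<union> B) = Ub A \<inter> Ub B" by (auto simp: Ub_def)
lemma bot_Lb: "(bot::'a::order_bot) \<in> Lb X" by (auto simp: Lb_def)
lemma LU_mono: "X \<subseteq> Y \<Longrightarrow> Lb (Ub X) \<subseteq> Lb (Ub Y)" by (auto simp: Lb_def Ub_def)
lemma LU_closed: "X \<subseteq> Lb C \<Longrightarrow> Lb (Ub X) \<subseteq> Lb C"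
  by (metis LUL LU_mono)

context
  fixes cm :: "'a::{order_bot,order_top} \<Rightarrow> 'a"
  assumes pc: "poset_compl cm"
begin

lemma anti: "x \<le> y \<Longrightarrow> cm y \<le> cm x" using pc by (auto simp: poset_compl_def)
lemma inv[simp]: "cm (cm x) = x" using pc by (auto simp: poset_compl_def)
lemma lbc: "Lb {x, cm x} = {bot}" using pc by (auto simp: poset_compl_def)
lemma ubc: "Ub {x, cm x} = {top}" using pc by (auto simp: poset_compl_def)
lemma anti_iff: "cm x \<le> cm y \<longleftrightarrow> y \<le> x" by (metis anti inv)

lemma cmcm: "cm ` cm ` S = S" by (auto simp: image_image)

lemma cm_Ub: "cm ` Ub M = Lb (cm ` M)"
proof
  show "cm ` Ub M \<subseteq> Lb (cm ` M)" by (auto simp: Ub_def Lb_def anti)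
  show "Lb (cm ` M) \<subseteq> cm ` Ub M"
  proof
    fix z assume "z \<in> Lb (cm ` M)"
    hence "\<forall>m\<in>M. z \<le> cm m" by (auto simp: Lb_def)
    hence "\<forall>m\<in>M. m \<le> cm z" by (metis anti inv)
    hence "cm z \<in> Ub M" by (auto simp: Ub_def)
    thus "z \<in> cm ` Ub M" by (metis image_eqI inv)
  qed
qed

lemma meet0: "x \<in> A \<Longrightarrow> x \<in> Lb (cm ` A) \<Longrightarrow> x = bot"
proof -
  assume "x \<in> A" "x \<in> Lb (cm ` A)"
  hence "x \<in> Lb {x, cm x}" by (auto simp: Lb_def)
  thus ?thesis using lbc[of x] by blast
qed

lemma compl_LU: "Lb (cm ` Lb (Ub M)) = Lb (cm ` M)"
  by (metis cm_Ub ULU)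

lemma meet0': "x \<in> Lb (Ub M) \<Longrightarrow> x \<in> Lb (cm ` M) \<Longrightarrow> x = bot"
  by (metis meet0 compl_LU)

lemma Lb_UNIV: "Lb (UNIV::'a set) = {bot}"
  by (auto simp: Lb_def intro: order.antisym)

lemma DM_props:
  "(\<forall>X\<in>DM. DM_compl cm X \<in> DM) \<and>
     (\<forall>X\<in>DM. \<forall>Y\<in>DM. X \<subseteq> Y \<longrightarrow> DM_compl cm Y \<subseteq> DM_compl cm X) \<and>
     (\<forall>X\<in>DM. DM_compl cm (DM_compl cm X) = X) \<and>
     (\<forall>X\<in>DM. DM_meet X (DM_compl cm X) = Lb (Ub {})) \<and>
     (\<forall>X\<in>DM. DM_join X (DM_compl cm X) = UNIV)"
proof (intro conjI ballI impI)
  fix X :: "'a set" assume X: "X \<in> DM"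
  show "DM_compl cm X \<in> DM" by (simp add: DM_def DM_compl_def LUL)
  show "DM_compl cm (DM_compl cm X) = X"
    using X by (simp add: DM_def DM_compl_def cm_Ub[symmetric] cmcm)
  show "DM_meet X (DM_compl cm X) = Lb (Ub {})"
  proof -
    have "Ub {} = (UNIV::'a set)" by (simp add: Ub_def)
    moreover have "X \<inter> Lb (cm ` X) = {bot}"
      using X meet0 bot_Lb[of "Ub X"] bot_Lb[of "cm ` X"] by (auto simp: DM_def)
    ultimately show ?thesis by (simp add: DM_meet_def DM_compl_def Lb_UNIV)
  qed
  show "DM_join X (DM_compl cm X) = UNIV"
  proof -
    have "Ub (X \<union> Lb (cm ` X)) \<subseteq> {top}"
    proof
      fix u assume u: "u \<in> Ub (X \<union> Lb (cm ` X))"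
      hence "cm u \<in> Lb (cm ` X)" by (auto simp: Ub_def Lb_def anti)
      hence "cm u \<le> u" using u by (auto simp: Ub_def)
      hence "u \<in> Ub {u, cm u}" by (auto simp: Ub_def)
      thus "u \<in> {top}" using ubc by auto
    qed
    hence "Lb {top} \<subseteq> Lb (Ub (X \<union> Lb (cm ` X)))" by (rule Lb_anti)
    moreover have "Lb {top} = (UNIV::'a set)" by (auto simp: Lb_def)
    ultimately show ?thesis by (auto simp: DM_join_def DM_compl_def)
  qed
next
  fix X Y :: "'a set" assume "X \<subseteq> Y"
  thus "DM_compl cm Y \<subseteq> DM_compl cm X" by (auto simp: DM_compl_def Lb_def)
qed


lemma DM_Lb: "Lb X \<in> DM" by (simp add: DM_def LUL)

lemma zero_from_D:
  assumes D: "strongly_D_continuous cm" and W: "W \<in> DM" and Z: "Z \<in> DM"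
    and WZ: "W \<subseteq> Z" and m: "Z \<inter> Lb (cm ` W) \<subseteq> {bot}"
  shows "Z = W"
proof -
  have Zc: "Lb (Ub Z) = Z" and Wc: "Lb (Ub W) = W" using W Z by (auto simp: DM_def)
  have sl: "set_le W (Ub Z)" using WZ by (auto simp: set_le_def Ub_def)
  let ?S = "{g. g \<in> Ub Z \<or> cm g \<in> W}"
  have "\<forall>x\<in>Lb ?S. x = bot"
  proof
    fix x assume x: "x \<in> Lb ?S"
    hence "x \<in> Lb (Ub Z)" by (auto simp: Lb_def)
    moreover have "x \<in> Lb (cm ` W)" using x by (auto simp: Lb_def)
    ultimately show "x = bot" using m Zc by auto
  qed
  hence "is_Inf ?S bot" by (auto simp: is_Inf_def bot_Lb)
  hence "set_le (Lb (Ub Z)) (Ub W)" using D sl unfolding strongly_D_continuous_def by blast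
  hence "Z \<subseteq> Lb (Ub W)" using Zc by (auto simp: set_le_def Lb_def)
  thus ?thesis using Wc WZ by auto
qed

lemma OM_from_zero:
  assumes zt: "\<And>W Z. W \<in> DM \<Longrightarrow> Z \<in> DM \<Longrightarrow> W \<subseteq> Z \<Longrightarrow> Z \<inter> Lb (cm ` W) \<subseteq> {bot} \<Longrightarrow> Z = W"
    and X: "X \<in> DM" and Y: "Y \<in> DM"
  shows "DM_join X Y = DM_join (DM_meet (DM_join X Y) (DM_compl cm Y)) Y"
proof -
  define Z where "Z = Lb (Ub (X \<union> Y))"
  define W where "W = Lb (Ub ((Z \<inter> Lb (cm ` Y)) \<union> Y))"
  have YZ: "Y \<subseteq> Z" unfolding Z_def using LU_ext[of "X \<union> Y"] by auto
  have WZ: "W \<subseteq> Z" unfolding W_def using YZ by (metis LU_closed Un_least inf_le1 Z_def)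
  have "Z \<inter> Lb (cm ` W) \<subseteq> {bot}"
  proof
    fix x assume x: "x \<in> Z \<inter> Lb (cm ` W)"
    hence "x \<in> Lb (cm ` ((Z \<inter> Lb (cm ` Y)) \<union> Y))" unfolding W_def by (simp add: compl_LU)
    hence a: "x \<in> Lb (cm ` (Z \<inter> Lb (cm ` Y)))" and b: "x \<in> Lb (cm ` Y)"
      by (auto simp: Lb_def)
    have "x \<in> Z \<inter> Lb (cm ` Y)" using x b by auto
    thus "x \<in> {bot}" using meet0[OF _ a] by blast
  qed
  hence "Z = W" using zt[of W Z] WZ by (simp add: W_def Z_def DM_Lb)
  thus ?thesis by (simp add: DM_join_def DM_meet_def DM_compl_def Z_def W_def)
qed

lemma zero_from_OM:
  assumes OM: "DM_orthomodular cm" and Y: "Y \<in> DM" and Z: "Z \<in> DM"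
    and YZ: "Y \<subseteq> Z" and m: "Z \<inter> Lb (cm ` Y) \<subseteq> {bot}"
  shows "Z = Y"
proof -
  have Zc: "Lb (Ub Z) = Z" and Yc: "Lb (Ub Y) = Y" using Y Z by (auto simp: DM_def)
  have "DM_join Z Y = DM_join (DM_meet (DM_join Z Y) (DM_compl cm Y)) Y"
    using OM Y Z unfolding DM_orthomodular_def by blast
  moreover have "DM_join Z Y = Z" using YZ Zc by (simp add: DM_join_def Un_absorb2)
  ultimately have "Z = Lb (Ub ((Z \<inter> Lb (cm ` Y)) \<union> Y))"
    by (simp add: DM_join_def DM_meet_def DM_compl_def)
  moreover have "(Z \<inter> Lb (cm ` Y)) \<union> Y = Y" using m Yc bot_Lb[of "Ub Y"] by auto
  ultimately show ?thesis using Yc by simp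
qed

lemma D_from_OM:
  assumes OM: "DM_orthomodular cm"
  shows "strongly_D_continuous cm"
  unfolding strongly_D_continuous_def
proof (intro allI impI iffI)
  fix B C :: "'a set"
  assume sl: "set_le B C"
  let ?S = "{g. g \<in> C \<or> cm g \<in> B}"
  {
    assume "set_le (Lb C) (Ub B)"
    hence LC: "Lb C \<subseteq> Lb (Ub B)" by (auto simp: set_le_def Lb_def)
    have "\<forall>x\<in>Lb ?S. x = bot"
    proof
      fix x assume x: "x \<in> Lb ?S"
      hence "x \<in> Lb C" by (auto simp: Lb_def)
      moreover have "x \<in> Lb (cm ` B)" using x by (auto simp: Lb_def)
      ultimately show "x = bot" using LC meet0' by blast
    qed
    thus "is_Inf ?S bot" by (auto simp: is_Inf_def bot_Lb)
  }
  assume inf: "is_Inf ?S bot"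
  have m: "Lb C \<inter> Lb (cm ` Lb (Ub B)) \<subseteq> {bot}"
  proof
    fix x assume "x \<in> Lb C \<inter> Lb (cm ` Lb (Ub B))"
    hence x1: "x \<in> Lb C" and x2: "x \<in> Lb (cm ` B)" by (auto simp: compl_LU)
    have "x \<in> Lb ?S"
    proof (unfold Lb_def, safe)
      fix g assume "g \<in> C" thus "x \<le> g" using x1 by (auto simp: Lb_def)
    next
      fix g assume "cm g \<in> B" thus "x \<le> g" using x2 by (force simp: Lb_def)
    qed
    thus "x \<in> {bot}" using inf by (auto simp: is_Inf_def intro: order.antisym)
  qed
  have BC: "B \<subseteq> Lb C" using sl by (auto simp: set_le_def Lb_def)
  have "Lb C = Lb (Ub B)"
    by (rule zero_from_OM[OF OM]) (auto simp: DM_Lb LU_closed[OF BC] m)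
  thus "set_le (Lb C) (Ub B)" by (auto simp: set_le_def Lb_def Ub_def)
qed

lemma PO_from_zero:
  assumes zt: "\<And>W Z. W \<in> DM \<Longrightarrow> Z \<in> DM \<Longrightarrow> W \<subseteq> Z \<Longrightarrow> Z \<inter> Lb (cm ` W) \<subseteq> {bot} \<Longrightarrow> Z = W"
  shows "pseudo_orthomodular cm"
  unfolding pseudo_orthomodular_def
proof (intro allI)
  fix x y :: 'a
  define A where "A = Lb {x, y}"
  define T where "T = Lb (Ub (A \<union> {cm y}))"
  define V where "V = Lb (Ub (A \<union> {cm y}) \<union> {y})"
  have V: "V = T \<inter> Lb {y}" unfolding V_def T_def by (rule Lb_Un)
  have AV: "A \<subseteq> V" unfolding V using LU_ext[of "A \<union> {cm y}"]
    by (auto simp: T_def A_def Lb_def)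
  have "V \<inter> Lb (cm ` A) \<subseteq> {bot}"
  proof
    fix z assume z: "z \<in> V \<inter> Lb (cm ` A)"
    hence "z \<in> Lb (cm ` (A \<union> {cm y}))" using V by (auto simp: Lb_def)
    moreover have "z \<in> Lb (Ub (A \<union> {cm y}))" using z V T_def by auto
    ultimately show "z \<in> {bot}" using meet0' by blast
  qed
  hence "V = A" using zt[of A V] AV by (simp add: A_def V_def DM_Lb)
  thus "Lb (Ub (Lb {x, y} \<union> {cm y}) \<union> {y}) = Lb {x, y}" by (simp add: V_def A_def)
qed

end

theorem theorem9:
  fixes cm :: "'a::{order_bot,order_top} \<Rightarrow> 'a"
  assumes "poset_compl cm"
  shows "DM_orthomodular cm \<longleftrightarrow> pseudo_orthomodular cm \<and> strongly_D_continuous cm"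
proof
  assume OM: "DM_orthomodular cm"
  show "pseudo_orthomodular cm \<and> strongly_D_continuous cm"
  proof
    show "pseudo_orthomodular cm"
      by (rule PO_from_zero[OF assms]) (rule zero_from_OM[OF assms OM])
    show "strongly_D_continuous cm" by (rule D_from_OM[OF assms OM])
  qed
next
  assume "pseudo_orthomodular cm \<and> strongly_D_continuous cm"
  hence D: "strongly_D_continuous cm" by blast
  have om: "\<forall>X\<in>DM. \<forall>Y\<in>DM.
        DM_join X Y = DM_join (DM_meet (DM_join X Y) (DM_compl cm Y)) Y"
  proof (intro ballI)
    fix X Y :: "'a set" assume "X \<in> DM" "Y \<in> DM"
    show "DM_join X Y = DM_join (DM_meet (DM_join X Y) (DM_compl cm Y)) Y"
      by (rule OM_from_zero[OF assms _ \<open>X \<in> DM\<close> \<open>Y \<in> DM\<close>])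
         (rule zero_from_D[OF assms D])
  qed
  show "DM_orthomodular cm"
    unfolding DM_orthomodular_def using DM_props[OF assms] om by (intro conjI) simp_all
qed

end
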